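(* Let $L$ be an even hyperbolic lattice with fixed positive cone $\mathcal{P}_L$, let $G$ be a subgroup of $\mathrm{O}^+(L)$ of finite index, and let $\mathcal{V}\subset\mathcal{N}_L\cap L^\vee$ satisfy conditions (V1)–(V4) below. Let $\Pi=\mathbb{R}_{\ge0}v_1+\cdots+\mathbb{R}_{\ge0}v_n$ be a rational polyhedral cone, where $v_1,\dots,v_n$ are non-zero vectors of $\overline{\mathcal{P}}_L\cap L$. Then the number of $\mathcal{V}^*$-chambers that intersect $\Pi\cap\mathcal{P}_L$ is finite. (V1) There is $c>0$ with $-v^2<c$ for all $v\in\mathcal{V}$. (V2) $\mathcal{V}$ is $G$-invariant. (V3) Every $\mathcal{V}^*$-chamber has a finite defining set. (V4) For every $\mathcal{V}^*$-chamber $D$, every non-zero vector $x$ in the closure of $D$ in $L\otimes\mathbb{R}$ with $x^2=0$ is a positive real multiple of a vector of $L$.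
   Context: $L$ is an even hyperbolic lattice: a free $\mathbb{Z}$-module of finite rank $n>1$ with a non-degenerate even symmetric bilinear form $\langle\ ,\ \rangle$ of signature $(1,n-1)$, extended to $L\otimes\mathbb{R}$, $x^2=\langle x,x\rangle$. $L^\vee\subset L\otimes\mathbb{Q}$ is the dual lattice. $\mathcal{P}_L$ is one of the two connected components of $\{x: x^2>0\}$ and $\overline{\mathcal{P}}_L$ its closure in $L\otimes\mathbb{R}$; $\mathrm{O}^+(L)$ is the group of isometries of $L$ preserving $\mathcal{P}_L$. $\mathcal{N}_L=\{v\in L\otimes\mathbb{R}: v^2<0\}$; for $v\in\mathcal{N}_L$, $(v)^\perp=\{x\in\mathcal{P}_L:\langle x,v\rangle=0\}$. For $\Delta\subset\mathcal{N}_L$, $\Sigma_L(\Delta)=\{x:\langle x,v\rangle\ge0\ \forall v\in\Delta\}$. A $\mathcal{V}^*$-chamber is the closure in $\mathcal{P}_L$ of a connected component of $\mathcal{P}_L\setminus\bigcup_{v\in\mathcal{V}}(v)^\perp$ (this family of hyperplanes is locally finite under (V1)). A defining set of a $\mathcal{V}^*$-chamber $D$ is a subset $\Delta\subset\mathcal{N}_L\cap L^\vee$ with $D=\Sigma_L(\Delta)\cap\mathcal{P}_L$. *)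

theory Defs
  imports "HOL-Analysis.Analysis"
begin

text \<open>The lattice L is Z^n inside L (x) R = R^n (index type 'n), with bilinear form
  given by a Gram matrix B (entries are the pairings of the basis vectors).\<close>

definition bform :: "real^'n^'n \<Rightarrow> real^'n \<Rightarrow> real^'n \<Rightarrow> real" where
  "bform B x y = x \<bullet> (B *v y)"

definition lat :: "(real^'n) set" where
  "lat = {x. \<forall>i. x $ i \<in> \<int>}"

definition dual_lat :: "real^'n^'n \<Rightarrow> (real^'n) set" where
  "dual_lat B = {x. (\<forall>i. x $ i \<in> \<rat>) \<and> (\<forall>l\<in>lat. bform B x l \<in> \<int>)}"

text \<open>Even hyperbolic lattice: integral symmetric Gram matrix, even diagonal,
  non-degenerate, signature (1, n-1) (Sylvester normal form), rank n > 1.\<close>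
definition even_hyperbolic :: "real^'n^'n \<Rightarrow> bool" where
  "even_hyperbolic B \<longleftrightarrow> CARD('n) > 1 \<and>
     (\<forall>i j. B $ i $ j \<in> \<int>) \<and> transpose B = B \<and>
     (\<forall>i. \<exists>k::int. B $ i $ i = 2 * of_int k) \<and> det B \<noteq> 0 \<and>
     (\<exists>(P::real^'n^'n) i0. invertible P \<and>
        transpose P ** B ** P = (\<chi> i j. if i = j then (if i = i0 then 1 else -1) else 0))"

definition pos_cone :: "real^'n^'n \<Rightarrow> real^'n \<Rightarrow> (real^'n) set" where
  "pos_cone B h = connected_component_set {x. bform B x x > 0} h"

definition neg_set :: "real^'n^'n \<Rightarrow> (real^'n) set" where
  "neg_set B = {v. bform B v v < 0}"

definition perp_hyp :: "real^'n^'n \<Rightarrow> real^'n \<Rightarrow> real^'n \<Rightarrow> (real^'n) set" where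
  "perp_hyp B h v = {x \<in> pos_cone B h. bform B x v = 0}"

definition Sigma_L :: "real^'n^'n \<Rightarrow> (real^'n) set \<Rightarrow> (real^'n) set" where
  "Sigma_L B \<Delta> = {x. \<forall>v\<in>\<Delta>. bform B x v \<ge> 0}"

definition O_plus :: "real^'n^'n \<Rightarrow> real^'n \<Rightarrow> (real^'n \<Rightarrow> real^'n) set" where
  "O_plus B h = {g. linear g \<and> bij g \<and> g ` lat = lat \<and>
      (\<forall>x y. bform B (g x) (g y) = bform B x y) \<and> g ` pos_cone B h = pos_cone B h}"

definition finite_index_subgroup ::
  "(real^'n \<Rightarrow> real^'n) set \<Rightarrow> (real^'n \<Rightarrow> real^'n) set \<Rightarrow> bool" where
  "finite_index_subgroup G Og \<longleftrightarrow> G \<subseteq> Og \<and> id \<in> G \<and>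
     (\<forall>g\<in>G. \<forall>k\<in>G. g \<circ> k \<in> G) \<and> (\<forall>g\<in>G. inv g \<in> G) \<and>
     (\<exists>F. finite F \<and> F \<subseteq> Og \<and> Og = (\<Union>f\<in>F. (\<lambda>g. f \<circ> g) ` G))"

definition chambers :: "real^'n^'n \<Rightarrow> real^'n \<Rightarrow> (real^'n) set \<Rightarrow> (real^'n) set set" where
  "chambers B h V = (let U = pos_cone B h - (\<Union>v\<in>V. perp_hyp B h v) in
     {closure (connected_component_set U x) \<inter> pos_cone B h | x. x \<in> U})"

definition defining_set :: "real^'n^'n \<Rightarrow> real^'n \<Rightarrow> (real^'n) set \<Rightarrow> (real^'n) set \<Rightarrow> bool" where
  "defining_set B h D \<Delta> \<longleftrightarrow> \<Delta> \<subseteq> neg_set B \<inter> dual_lat B \<and> D = Sigma_L B \<Delta> \<inter> pos_cone B h"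

end

theory Submission
  imports Defs
begin


locale lor =
  fixes B :: "real^'n^'n" and h :: "real^'n"
  assumes symB: "transpose B = B"
    and F2s: "\<And>x y. bform B x x > 0 \<Longrightarrow> bform B x y = 0 \<Longrightarrow> y \<noteq> 0 \<Longrightarrow> bform B y y < 0"
    and hpos: "bform B h h > 0"
begin

abbreviation q where "q \<equiv> bform B"

lemma q_sym: "q x y = q y x"
proof -
  have "q x y = (x v* B) \<bullet> y" by (simp add: bform_def dot_lmul_matrix)
  also have "\<dots> = (transpose B *v x) \<bullet> y" by simp
  also have "\<dots> = y \<bullet> (B *v x)" using symB by (simp add: inner_commute)
  finally show ?thesis by (simp add: bform_def)
qed

lemma q_add_left: "q (x + y) z = q x z + q y z" by (simp add: bform_def inner_add_left)
lemma q_diff_left: "q (x - y) z = q x z - q y z" by (simp add: bform_def inner_diff_left)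
lemma q_scale_left: "q (a *\<^sub>R x) z = a * q x z" by (simp add: bform_def)
lemma q_sum_left: "q (\<Sum>s\<in>S. f s) z = (\<Sum>s\<in>S. q (f s) z)" by (simp add: bform_def inner_sum_left)
lemma q_zero_left[simp]: "q 0 z = 0" by (simp add: bform_def)
lemma q_add_right: "q z (x + y) = q z x + q z y" using q_add_left[of x y z] q_sym[of z "x+y"] q_sym[of z x] q_sym[of z y] by simp
lemma q_diff_right: "q z (x - y) = q z x - q z y" using q_diff_left[of x y z] q_sym[of z "x-y"] q_sym[of z x] q_sym[of z y] by simp
lemma q_scale_right: "q z (a *\<^sub>R x) = a * q z x" using q_scale_left[of a x z] q_sym[of z "a *\<^sub>R x"] q_sym[of z x] by simp
lemma q_sum_right: "q z (\<Sum>s\<in>S. f s) = (\<Sum>s\<in>S. q z (f s))" 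
proof -
  have "q z (\<Sum>s\<in>S. f s) = q (\<Sum>s\<in>S. f s) z" by (rule q_sym)
  also have "\<dots> = (\<Sum>s\<in>S. q (f s) z)" by (rule q_sum_left)
  also have "\<dots> = (\<Sum>s\<in>S. q z (f s))" by (rule sum.cong[OF refl]) (rule q_sym)
  finally show ?thesis .
qed
lemma q_zero_right[simp]: "q z 0 = 0" using q_sym[of z 0] by simp

lemma q_cont: "continuous_on T f \<Longrightarrow> continuous_on T g \<Longrightarrow> continuous_on T (\<lambda>x. q (f x) (g x))"
  unfolding bform_def
  by (intro continuous_on_inner bounded_linear.continuous_on[OF matrix_vector_mul_bounded_linear]) auto

lemma F2: "q x x > 0 \<Longrightarrow> q x y = 0 \<Longrightarrow> q y y \<le> 0"
  using F2s[of x y] by (cases "y = 0") auto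

lemma q_expand: "q (a + t *\<^sub>R b) (a + t *\<^sub>R b) = q a a + 2*t*q a b + t^2 * q b b"
  by (simp add: q_add_left q_add_right q_scale_left q_scale_right q_sym[of b a] power2_eq_square algebra_simps)

lemma q_expand_lin: "q c (a + t *\<^sub>R b) = q c a + t * q c b"
  by (simp add: q_add_right q_scale_right)

lemma quad_aux:
  fixes A Bq C t :: real
  assumes "C \<noteq> 0" "t * C = - Bq"
  shows "C * (A + 2*t*Bq + t^2*C) = C*A - Bq^2"
proof -
  have "C * (A + 2*t*Bq + t^2*C) = C*A + 2*(t*C)*Bq + (t*C)^2"
    by (simp add: algebra_simps power2_eq_square)
  also have "\<dots> = C*A - Bq^2" using assms(2) by (simp add: power2_eq_square)
  finally show ?thesis .
qed

lemma rev_cs: assumes "q x x > 0" shows "q x x * q y y \<le> (q x y)^2"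
proof -
  define t where "t = - q x y / q x x"
  have tx: "t * q x x = - q y x" using assms by (simp add: t_def q_sym[of x y])
  have "q x (y + t *\<^sub>R x) = 0" using assms unfolding q_expand_lin by (simp add: t_def)
  hence "q (y + t *\<^sub>R x) (y + t *\<^sub>R x) \<le> 0" using F2 assms by blast
  hence "q x x * q (y + t *\<^sub>R x) (y + t *\<^sub>R x) \<le> 0" using assms by (simp add: mult_nonneg_nonpos)
  also have "q x x * q (y + t *\<^sub>R x) (y + t *\<^sub>R x) = q x x * q y y - (q y x)^2"
    unfolding q_expand using quad_aux[OF _ tx] assms by simp
  finally show ?thesis by (simp add: q_sym[of y x])
qed

lemma perp_cs: assumes "q w w > 0" "q a w = 0" "q b w = 0" shows "(q a b)^2 \<le> q a a * q b b"
proof (cases "b = 0")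
  case True then show ?thesis by simp
next
  case False
  have bb: "q b b < 0" using F2s[OF assms(1), of b] False assms(3) q_sym by metis
  define t where "t = - q a b / q b b"
  have tb: "t * q b b = - q a b" using bb by (simp add: t_def)
  have "q w (a + t *\<^sub>R b) = 0" using assms unfolding q_expand_lin by (simp add: q_sym[of w a] q_sym[of w b])
  hence "q (a + t *\<^sub>R b) (a + t *\<^sub>R b) \<le> 0" using F2 assms(1) by blast
  hence "q b b * q (a + t *\<^sub>R b) (a + t *\<^sub>R b) \<ge> 0" using bb by (simp add: mult_nonpos_nonpos)
  also have "q b b * q (a + t *\<^sub>R b) (a + t *\<^sub>R b) = q b b * q a a - (q a b)^2"
    unfolding q_expand using quad_aux[OF _ tb] bb by simp
  finally show ?thesis by (simp add: mult.commute)
qed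

lemma key_cs: assumes "q w w > 0" "q v w = 0"
  shows "(q v y)^2 \<le> (- q v v) * ((q w y)^2 / q w w - q y y)"
proof -
  define t where "t = - q w y / q w w"
  define y' where "y' = y + t *\<^sub>R w"
  have tw: "t * q w w = - q y w" using assms by (simp add: t_def q_sym[of w y])
  have y'w: "q w y' = 0" using assms unfolding y'_def q_expand_lin by (simp add: t_def)
  have "q v y' = q v y" using assms unfolding y'_def q_expand_lin by simp
  moreover have "q w w * q y' y' = q w w * q y y - (q y w)^2"
    unfolding y'_def q_expand using quad_aux[OF _ tw] assms by simp
  hence "q y' y' = q y y - (q w y)^2 / q w w" using assms by (simp add: field_simps q_sym[of y w])
  moreover have "(q v y')^2 \<le> q v v * q y' y'" using perp_cs[OF assms(1) assms(2)] y'w q_sym by metis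
  ultimately have "(q v y)^2 \<le> q v v * (q y y - (q w y)^2 / q w w)" by simp
  thus ?thesis by (simp add: algebra_simps)
qed

end


lemma sign_const:
  fixes f :: "'a::topological_space \<Rightarrow> real"
  assumes "connected T" "continuous_on T f" "\<forall>y\<in>T. f y \<noteq> 0" "x \<in> T" "f x > 0" "y \<in> T"
  shows "f y > 0"
proof (rule ccontr)
  assume "\<not> f y > 0"
  hence "f y \<le> 0" by simp
  have "connected (f ` T)" using connected_continuous_image assms by blast
  hence "0 \<in> f ` T" using \<open>f y \<le> 0\<close> assms(4,5,6) unfolding connected_iff_interval
    by (metis imageI less_le)
  thus False using assms(3) by auto
qed

context lor begin

definition Cp where "Cp = {x. q x x > 0 \<and> q x h > 0}"

lemma timelike_ne: "q x x > 0 \<Longrightarrow> q y y > 0 \<Longrightarrow> q x y \<noteq> 0"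
  using rev_cs[of x y] by (metis mult_pos_pos not_le power2_eq_square mult_zero_left)

lemma h_Cp: "h \<in> Cp" using hpos by (simp add: Cp_def)

lemma Cp_inner: assumes "x \<in> Cp" "y \<in> Cp" shows "q x y > 0"
proof (rule ccontr)
  assume a: "\<not> q x y > 0"
  have xx: "q x x > 0" "q x h > 0" and yy: "q y y > 0" "q y h > 0" using assms by (auto simp: Cp_def)
  have "q x y \<noteq> 0" using timelike_ne xx yy by blast
  hence neg: "q x y < 0" using a by simp
  have hy: "q h y > 0" using yy q_sym by metis
  define t where "t = - q x y / q h y"
  have t: "t > 0" using neg hy unfolding t_def by (intro divide_pos_pos) auto
  have "q (x + t *\<^sub>R h) y = 0" using hy unfolding q_add_left q_scale_left by (simp add: t_def)
  moreover have "q (x + t *\<^sub>R h) (x + t *\<^sub>R h) > 0"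
    unfolding q_expand using xx t hpos q_sym[of x h]
    by (simp add: add_pos_pos mult_pos_pos add_pos_nonneg)
  ultimately show False using timelike_ne yy by blast
qed

lemma Cp_convex: "convex Cp"
  unfolding convex_def
proof (intro ballI allI impI)
  fix x y and a b :: real
  assume x: "x \<in> Cp" and y: "y \<in> Cp" and uv: "0 \<le> a" "0 \<le> b" "a + b = 1"
  have xx: "q x x > 0" "q x h > 0" and yy: "q y y > 0" "q y h > 0" using x y by (auto simp: Cp_def)
  have xy: "q x y > 0" using Cp_inner x y by blast
  have e: "q (a *\<^sub>R x + b *\<^sub>R y) (a *\<^sub>R x + b *\<^sub>R y) = a^2 * q x x + 2*a*b*q x y + b^2 * q y y"
    by (simp add: q_add_left q_add_right q_scale_left q_scale_right q_sym[of y x] power2_eq_square algebra_simps)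
  have "a^2 * q x x + b^2 * q y y > 0"
  proof (cases "a = 0")
    case True then have "b = 1" using uv by simp
    then show ?thesis using True yy by simp
  next
    case False then have "a > 0" using uv by simp
    then show ?thesis using xx yy by (simp add: add_pos_nonneg)
  qed
  moreover have "2*a*b*q x y \<ge> 0" using uv xy by simp
  ultimately have "q (a *\<^sub>R x + b *\<^sub>R y) (a *\<^sub>R x + b *\<^sub>R y) > 0" using e by simp
  moreover have "q (a *\<^sub>R x + b *\<^sub>R y) h > 0"
  proof -
    have "q (a *\<^sub>R x + b *\<^sub>R y) h = a * q x h + b * q y h" by (simp add: q_add_left q_scale_left)
    moreover have "a * q x h + b * q y h > 0"
    proof (cases "a = 0")
      case True then show ?thesis using uv yy by simp
    next
      case False then show ?thesis using uv xx yy by (simp add: add_pos_nonneg)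
    qed
    ultimately show ?thesis by simp
  qed
  ultimately show "a *\<^sub>R x + b *\<^sub>R y \<in> Cp" by (simp add: Cp_def)
qed

lemma pos_cone_eq: "pos_cone B h = Cp"
proof
  show "Cp \<subseteq> pos_cone B h"
    unfolding pos_cone_def
    by (rule connected_component_maximal[OF h_Cp convex_connected[OF Cp_convex]]) (auto simp: Cp_def)
next
  show "pos_cone B h \<subseteq> Cp"
  proof
    fix y assume y: "y \<in> pos_cone B h"
    let ?T = "connected_component_set {x. q x x > 0} h"
    have sub: "?T \<subseteq> {x. q x x > 0}" by (rule connected_component_subset)
    have "q y h > 0"
    proof (rule sign_const[of ?T "\<lambda>x. q x h" h y])
      show "connected ?T" by simp
      show "continuous_on ?T (\<lambda>x. q x h)" by (intro q_cont continuous_intros)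
      show "\<forall>y\<in>?T. q y h \<noteq> 0" using sub timelike_ne hpos by blast
      show "h \<in> ?T" using hpos by simp
      show "q h h > 0" by (rule hpos)
      show "y \<in> ?T" using y by (simp add: pos_cone_def)
    qed
    moreover have "q y y > 0" using y sub by (auto simp: pos_cone_def)
    ultimately show "y \<in> Cp" by (simp add: Cp_def)
  qed
qed

lemma closed_q_ge: "closed {s. q (f s) (g s) \<ge> (0::real)}" if "continuous_on UNIV f" "continuous_on UNIV g"
  using closed_Collect_le[of "\<lambda>s. 0" "\<lambda>s. q (f s) (g s)"] q_cont[OF that] by auto

lemma clos_qq: "s \<in> closure Cp \<Longrightarrow> q s s \<ge> 0"
proof -
  have "closure Cp \<subseteq> {s. q s s \<ge> 0}"
    by (rule closure_minimal) (auto simp: Cp_def intro!: closed_q_ge continuous_intros)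
  thus "s \<in> closure Cp \<Longrightarrow> q s s \<ge> 0" by auto
qed

lemma clos_qx: "s \<in> closure Cp \<Longrightarrow> x \<in> Cp \<Longrightarrow> q x s \<ge> 0"
proof -
  assume x: "x \<in> Cp"
  have "closure Cp \<subseteq> {s. q x s \<ge> 0}"
    by (rule closure_minimal) (use Cp_inner x in \<open>auto simp: less_imp_le intro!: closed_q_ge continuous_intros\<close>)
  thus "s \<in> closure Cp \<Longrightarrow> q x s \<ge> 0" by auto
qed

lemma clos_qt: "s \<in> closure Cp \<Longrightarrow> t \<in> closure Cp \<Longrightarrow> q s t \<ge> 0"
proof -
  assume s: "s \<in> closure Cp"
  have "closure Cp \<subseteq> {t. q s t \<ge> 0}"
  proof (rule closure_minimal)
    show "Cp \<subseteq> {t. q s t \<ge> 0}" using clos_qx s q_sym by fastforce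
    show "closed {t. q s t \<ge> 0}" by (intro closed_q_ge continuous_intros)
  qed
  thus "t \<in> closure Cp \<Longrightarrow> q s t \<ge> 0" by auto
qed

lemma clos_x_pos: assumes "x \<in> Cp" "s \<in> closure Cp" "s \<noteq> 0" shows "q x s > 0"
proof -
  have "q x s \<ge> 0" using clos_qx assms by blast
  moreover have "q x s \<noteq> 0"
  proof
    assume "q x s = 0"
    hence "q s s < 0" using F2s[of x s] assms by (auto simp: Cp_def)
    thus False using clos_qq assms by force
  qed
  ultimately show ?thesis by simp
qed

lemma clos_h_pos: "s \<in> closure Cp \<Longrightarrow> s \<noteq> 0 \<Longrightarrow> q s h > 0"
  using clos_x_pos[OF h_Cp] q_sym by metis

lemma clos_prop: assumes u: "u \<in> closure Cp" "u \<noteq> 0" and z: "z \<in> closure Cp" and uz: "q u z = 0"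
  shows "z = (q z h / q u h) *\<^sub>R u"
proof (rule ccontr)
  define l where "l = q z h / q u h"
  define d where "d = z + (- l) *\<^sub>R u"
  assume "z \<noteq> (q z h / q u h) *\<^sub>R u"
  hence dn: "d \<noteq> 0" by (simp add: d_def l_def)
  have uh: "q u h > 0" using clos_h_pos u by blast
  have "q h d = 0" using uh unfolding d_def q_expand_lin by (simp add: l_def q_sym[of h z] q_sym[of h u])
  hence "q d d < 0" using F2s[OF hpos] dn by blast
  moreover have "q d d = q z z + l^2 * q u u" unfolding d_def q_expand using uz q_sym[of z u] by simp
  moreover have "q z z \<ge> 0" "q u u \<ge> 0" using clos_qq u z by auto
  ultimately show False by (smt (verit) zero_le_power2 mult_nonneg_nonneg)
qed

end


lemma int_sq_lt1: fixes x :: real assumes "x \<in> \<int>" "x^2 < 1" shows "x = 0"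
proof -
  obtain k where k: "x = of_int k" using assms(1) Ints_cases by blast
  have "\<bar>x\<bar> < 1" using assms(2) by (simp add: abs_square_less_1)
  hence "\<bar>k\<bar> < 1" using k by linarith
  hence "k = 0" by simp
  thus ?thesis using k by simp
qed

context lor begin

lemma comb_lin: "q t (\<Sum>s\<in>S. d s *\<^sub>R s) = (\<Sum>s\<in>S. d s * q t s)"
  by (simp add: q_sum_right q_scale_right)

lemma comb_lin_left: "q (\<Sum>s\<in>S. d s *\<^sub>R s) t = (\<Sum>s\<in>S. d s * q s t)"
  by (simp add: q_sum_left q_scale_left)

lemma comb_nonneg: assumes "S \<subseteq> closure Cp" "\<forall>s\<in>S. d s \<ge> 0" "t \<in> closure Cp"
  shows "q t (\<Sum>s\<in>S. d s *\<^sub>R s) \<ge> 0"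
  unfolding comb_lin by (intro sum_nonneg) (use assms clos_qt in auto)

lemma comb_sq: assumes "finite S" "S \<subseteq> closure Cp" "\<forall>s\<in>S. d s \<ge> 0" "m \<in> S"
  shows "q (\<Sum>s\<in>S. d s *\<^sub>R s) (\<Sum>s\<in>S. d s *\<^sub>R s) \<ge> d m * q m (\<Sum>s\<in>S. d s *\<^sub>R s)"
proof -
  let ?y = "\<Sum>s\<in>S. d s *\<^sub>R s"
  have "q ?y ?y = (\<Sum>s\<in>S. d s * q s ?y)" by (rule comb_lin_left)
  also have "\<dots> \<ge> d m * q m ?y"
    by (rule member_le_sum) (use assms in \<open>auto intro!: mult_nonneg_nonneg comb_nonneg[OF assms(2) assms(3)]\<close>)
  finally show ?thesis .
qed

lemma good_w_core:
  assumes S: "finite S" "S \<subseteq> closure Cp \<inter> lat" "0 \<notin> S" and cV: "cV > 0"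
    and mu: "\<mu> > 0" "\<forall>s\<in>S. \<forall>t\<in>S. q s t > 0 \<longrightarrow> \<mu> \<le> q s t"
    and Mx: "Mx \<ge> 0" "\<forall>t\<in>S. \<forall>d. (\<forall>s\<in>S. 0 \<le> d s \<and> d s \<le> 1) \<longrightarrow> \<bar>q (\<Sum>s\<in>S. d s *\<^sub>R s) t\<bar> \<le> Mx"
    and e0: "\<epsilon>0 = \<mu> / (cV * Mx^2 + 1)"
    and v: "v \<in> dual_lat B" "- q v v < cV"
    and c: "\<forall>s\<in>S. c s \<ge> 0" "(\<Sum>s\<in>S. c s *\<^sub>R s) \<in> Cp" "q (\<Sum>s\<in>S. c s *\<^sub>R s) v = 0"
  shows "\<exists>d. (\<forall>s\<in>S. 0 \<le> d s \<and> d s \<le> 1) \<and> \<mu> * min 1 \<epsilon>0 \<le> q (\<Sum>s\<in>S. d s *\<^sub>R s) (\<Sum>s\<in>S. d s *\<^sub>R s)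
     \<and> q (\<Sum>s\<in>S. d s *\<^sub>R s) v = 0"
proof -
  define x where "x = (\<Sum>s\<in>S. c s *\<^sub>R s)"
  have xCp: "x \<in> Cp" using c by (simp add: x_def)
  have Scl: "S \<subseteq> closure Cp" using S by auto
  have Sne: "S \<noteq> {}" using xCp by (auto simp: x_def Cp_def)
  have "Max (c ` S) \<in> c ` S" using S(1) Sne by (intro Max_in) auto
  then obtain m where m: "m \<in> S" "c m = Max (c ` S)" by (auto simp: image_iff)
  have cle: "\<forall>s\<in>S. c s \<le> c m" using m S(1) by simp
  have mcl: "m \<in> closure Cp" "m \<noteq> 0" "m \<in> lat" using m S by auto
  have cm: "c m > 0"
  proof (rule ccontr)
    assume "\<not> c m > 0"
    hence "\<forall>s\<in>S. c s = 0" using cle c(1) by force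
    hence "x = 0" by (simp add: x_def)
    thus False using xCp by (simp add: Cp_def)
  qed
  define c1 where "c1 s = c s / c m" for s
  define x1 where "x1 = (\<Sum>s\<in>S. c1 s *\<^sub>R s)"
  have x1x: "x1 = (1 / c m) *\<^sub>R x" by (simp add: x1_def x_def c1_def scaleR_sum_right)
  have x1Cp: "x1 \<in> Cp"
  proof -
    have "q x1 x1 = (1/c m)^2 * q x x" by (simp add: x1x q_scale_left q_scale_right power2_eq_square)
    moreover have "q x1 h = (1/c m) * q x h" by (simp add: x1x q_scale_left)
    ultimately show ?thesis using xCp cm by (simp add: Cp_def)
  qed
  have x1v: "q x1 v = 0" using c by (simp add: x1x q_scale_left x_def)
  have c1: "\<forall>s\<in>S. 0 \<le> c1 s \<and> c1 s \<le> 1" using cle c(1) cm by (simp add: c1_def)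
  have c1m: "c1 m = 1" using cm by (simp add: c1_def)
  have c1nn: "\<forall>s\<in>S. 0 \<le> c1 s" using c1 by blast
  have mm0: "q m m \<ge> 0" using clos_qq mcl by blast
  have sq1: "q x1 x1 \<ge> q m x1" using comb_sq[OF S(1) Scl c1nn m(1)] c1m by (simp add: x1_def)
  have mx1_sum: "q m x1 = (\<Sum>t\<in>S. c1 t * q m t)" by (simp add: x1_def comb_lin)
  have dpos: "\<mu> * min 1 \<epsilon>0 \<le> \<mu>" using mu by (simp add: mult_left_le)
  have dpos2: "\<mu> * min 1 \<epsilon>0 \<le> \<mu> * \<epsilon>0" using mu by (simp add: mult_left_mono)
  show ?thesis
  proof (cases "q m m > 0")
    case True
    have "q m x1 \<ge> c1 m * q m m" unfolding mx1_sum
      by (rule member_le_sum) (use m c1 clos_qt mcl Scl S in \<open>auto intro!: mult_nonneg_nonneg\<close>)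
    hence "q x1 x1 \<ge> \<mu>" using sq1 c1m mu(2) m True by force
    thus ?thesis using c1 x1v dpos unfolding x1_def by (intro exI[of _ c1]) auto
  next
    case False
    hence mm: "q m m = 0" using mm0 by simp
    define A where "A = {t\<in>S. q m t > 0}"
    define \<epsilon> where "\<epsilon> = (\<Sum>t\<in>A. c1 t)"
    have AS: "A \<subseteq> S" "finite A" using S(1) by (auto simp: A_def intro: finite_subset)
    have mA: "m \<notin> A" using mm by (simp add: A_def)
    have zeroSA: "\<forall>t\<in>S - A. q m t = 0" using clos_qt mcl Scl by (force simp: A_def)
    have mx1: "q m x1 = (\<Sum>t\<in>A. c1 t * q m t)" unfolding mx1_sum
      by (rule sum.mono_neutral_right) (use S(1) AS zeroSA in auto)
    have "(\<Sum>t\<in>A. c1 t * q m t) \<ge> (\<Sum>t\<in>A. c1 t * \<mu>)"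
      by (rule sum_mono) (use AS c1 mu(2) m in \<open>auto simp: A_def intro!: mult_left_mono\<close>)
    hence ge: "q m x1 \<ge> \<mu> * \<epsilon>" using mx1 by (simp add: \<epsilon>_def sum_distrib_left mult.commute)
    have pos: "q m x1 > 0" using clos_x_pos[OF x1Cp mcl(1) mcl(2)] q_sym by metis
    have enn: "\<epsilon> \<ge> 0" unfolding \<epsilon>_def using c1 AS by (auto intro!: sum_nonneg)
    show ?thesis
    proof (cases "\<epsilon> \<ge> \<epsilon>0")
      case True
      have "\<mu> * \<epsilon>0 \<le> \<mu> * \<epsilon>" using True mu by (simp add: mult_left_mono)
      hence "q x1 x1 \<ge> \<mu> * min 1 \<epsilon>0" using sq1 ge dpos2 by linarith
      thus ?thesis using c1 x1v unfolding x1_def by (intro exI[of _ c1]) auto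
    next
      case False
      hence small: "\<epsilon> < \<epsilon>0" by simp
      have epos: "\<epsilon> > 0"
      proof (rule ccontr)
        assume "\<not> \<epsilon> > 0"
        hence "\<epsilon> = 0" using enn by simp
        hence "\<forall>t\<in>A. c1 t = 0" unfolding \<epsilon>_def using sum_nonneg_eq_0_iff[OF AS(2)] c1 AS by blast
        hence "q m x1 = 0" using mx1 by simp
        thus False using pos by simp
      qed
      have qx1: "q x1 x1 \<ge> \<mu> * \<epsilon>" using sq1 ge by linarith
      have mue: "\<mu> * \<epsilon> > 0" using mu epos by simp
      define Nb where "Nb = cV * Mx^2 / (\<mu> * \<epsilon>)"
      have Nbnn: "Nb \<ge> 0" using cV mue by (simp add: Nb_def)
      have nb: "(q v t)^2 \<le> Nb" if t: "t \<in> S" for t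
      proof -
        have x1x1: "q x1 x1 > 0" using x1Cp by (simp add: Cp_def)
        have vx1: "q v x1 = 0" using x1v q_sym by metis
        have k: "(q v t)^2 \<le> (- q v v) * ((q x1 t)^2 / q x1 x1 - q t t)" by (rule key_cs[OF x1x1 vx1])
        have tt: "q t t \<ge> 0" using clos_qq t Scl by blast
        have "q x1 x1 * q t t \<le> (q x1 t)^2" by (rule rev_cs[OF x1x1])
        hence F0: "(q x1 t)^2 / q x1 x1 - q t t \<ge> 0" using x1x1 by (simp add: field_simps)
        have "(- q v v) * ((q x1 t)^2 / q x1 x1 - q t t) \<le> cV * ((q x1 t)^2 / q x1 x1 - q t t)"
          using v(2) F0 by (intro mult_right_mono) auto
        also have "\<dots> \<le> cV * ((q x1 t)^2 / q x1 x1)" using cV tt by (intro mult_left_mono) auto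
        also have "(q x1 t)^2 / q x1 x1 \<le> Mx^2 / (\<mu> * \<epsilon>)"
        proof (rule frac_le)
          have "\<bar>q x1 t\<bar> \<le> Mx" using Mx(2) t c1 unfolding x1_def by blast
          hence "\<bar>q x1 t\<bar>^2 \<le> Mx^2" by (intro power_mono) auto
          thus "(q x1 t)^2 \<le> Mx^2" by simp
        qed (use mue qx1 in auto)
        hence "cV * ((q x1 t)^2 / q x1 x1) \<le> cV * (Mx^2 / (\<mu> * \<epsilon>))" using cV by (intro mult_left_mono) auto
        finally show ?thesis using k by (simp add: Nb_def)
      qed
      have absnb: "\<bar>q v t\<bar> \<le> sqrt Nb" if "t \<in> S" for t
        using real_sqrt_le_mono[OF nb[OF that]] by simp
      define lam where "lam t = q t h / q m h" for t
      have mh: "q m h > 0" using clos_h_pos mcl by blast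
      have lamnn: "lam t \<ge> 0" if "t \<in> S" for t
      proof -
        have "q h t \<ge> 0" using clos_qx[OF _ h_Cp, of t] that Scl by blast
        hence "q t h \<ge> 0" using q_sym[of h t] by simp
        thus ?thesis using mh unfolding lam_def by simp
      qed
      have lamm: "lam m = 1" using mh by (simp add: lam_def)
      have nt: "q v t = lam t * q v m" if "t \<in> S - A" for t
      proof -
        have "t = lam t *\<^sub>R m" unfolding lam_def
          by (rule clos_prop) (use that mcl Scl zeroSA in auto)
        hence "q v t = q v (lam t *\<^sub>R m)" by simp
        thus ?thesis by (simp add: q_scale_right)
      qed
      have "0 = q v x1" using x1v q_sym by metis
      also have "\<dots> = (\<Sum>t\<in>S. c1 t * q v t)" by (simp add: x1_def comb_lin)
      also have "\<dots> = (\<Sum>t\<in>S - A. c1 t * q v t) + (\<Sum>t\<in>A. c1 t * q v t)"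
        by (rule sum.subset_diff) (use AS S in auto)
      also have "(\<Sum>t\<in>S - A. c1 t * q v t) = (\<Sum>t\<in>S - A. q v m * (c1 t * lam t))"
        by (rule sum.cong[OF refl]) (metis nt mult.commute mult.left_commute)
      also have "\<dots> = q v m * (\<Sum>t\<in>S - A. c1 t * lam t)" by (simp add: sum_distrib_left)
      finally have split: "q v m * (\<Sum>t\<in>S - A. c1 t * lam t) = - (\<Sum>t\<in>A. c1 t * q v t)" by linarith
      have Lam: "(\<Sum>t\<in>S - A. c1 t * lam t) \<ge> 1"
      proof -
        have "c1 m * lam m \<le> (\<Sum>t\<in>S - A. c1 t * lam t)"
          by (rule member_le_sum) (use m mA c1 lamnn S in auto)
        thus ?thesis using c1m lamm by simp
      qed
      define Lm where "Lm = (\<Sum>t\<in>S - A. c1 t * lam t)"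
      have "\<bar>q v m\<bar> * 1 \<le> \<bar>q v m\<bar> * Lm" using Lam unfolding Lm_def by (intro mult_left_mono) auto
      hence "\<bar>q v m\<bar> \<le> \<bar>q v m\<bar> * Lm" by simp
      also have "\<bar>q v m\<bar> * Lm = \<bar>q v m * Lm\<bar>" using Lam unfolding Lm_def by (simp add: abs_mult)
      also have "\<dots> = \<bar>\<Sum>t\<in>A. c1 t * q v t\<bar>" unfolding Lm_def split by simp
      also have "\<dots> \<le> (\<Sum>t\<in>A. \<bar>c1 t * q v t\<bar>)" by (rule sum_abs)
      also have "\<dots> \<le> (\<Sum>t\<in>A. c1 t * sqrt Nb)"
      proof (rule sum_mono)
        fix t assume t: "t \<in> A"
        hence tS: "t \<in> S" using AS by auto
        have "\<bar>c1 t * q v t\<bar> = c1 t * \<bar>q v t\<bar>" using c1 tS by (simp add: abs_mult)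
        also have "\<dots> \<le> c1 t * sqrt Nb" using absnb[OF tS] c1 tS by (intro mult_left_mono) auto
        finally show "\<bar>c1 t * q v t\<bar> \<le> c1 t * sqrt Nb" .
      qed
      also have "\<dots> = \<epsilon> * sqrt Nb" by (simp add: \<epsilon>_def sum_distrib_right)
      finally have vm: "\<bar>q v m\<bar> \<le> \<epsilon> * sqrt Nb" .
      have "(q v m)^2 \<le> (\<epsilon> * sqrt Nb)^2"
        using power_mono[OF vm, of 2] by simp
      also have "\<dots> = \<epsilon>^2 * Nb" using Nbnn by (simp add: power_mult_distrib)
      also have "\<dots> = \<epsilon> * cV * Mx^2 / \<mu>" using epos mu by (simp add: Nb_def power2_eq_square field_simps)
      also have "\<dots> < 1"
      proof -
        have "cV * Mx^2 \<ge> 0" using cV by simp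
        hence dpos: "cV * Mx^2 + 1 > 0" by linarith
        have "\<epsilon> * (cV * Mx^2 + 1) < \<mu>" using small e0 pos_less_divide_eq[OF dpos] by simp
        hence "\<epsilon> * cV * Mx^2 < \<mu>" using epos by (simp add: algebra_simps)
        thus ?thesis using mu by simp
      qed
      finally have "(q v m)^2 < 1" .
      moreover have "q v m \<in> \<int>" using v(1) mcl(3) by (simp add: dual_lat_def)
      ultimately have vm0: "q v m = 0" using int_sq_lt1 by blast
      have nt0: "q v t = 0" if "t \<in> S - A" for t using nt[OF that] vm0 by simp
      have sumA0: "(\<Sum>t\<in>A. c1 t * q v t) = 0" using split vm0 by simp
      define d where "d s = (if s = m then 1 else if s \<in> A then c1 s / \<epsilon> else 0)" for s
      have c1le: "c1 s \<le> \<epsilon>" if "s \<in> A" for s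
        unfolding \<epsilon>_def by (rule member_le_sum) (use that AS c1 in auto)
      have d01: "\<forall>s\<in>S. 0 \<le> d s \<and> d s \<le> 1"
        using c1 c1le epos AS by (auto simp: d_def)
      define w where "w = (\<Sum>s\<in>S. d s *\<^sub>R s)"
      have "q w v = (\<Sum>s\<in>S. d s * q v s)" unfolding w_def comb_lin_left
        by (rule sum.cong[OF refl]) (metis q_sym)
      also have "\<dots> = (\<Sum>s\<in>A. (1/\<epsilon>) * (c1 s * q v s))"
        by (rule sum.mono_neutral_cong_right) (use S AS nt0 mA in \<open>auto simp: d_def\<close>)
      also have "\<dots> = (1/\<epsilon>) * (\<Sum>s\<in>A. c1 s * q v s)" by (rule sum_distrib_left[symmetric])
      also have "\<dots> = 0" using sumA0 by simp
      finally have wv: "q w v = 0" .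
      have dnn: "\<forall>s\<in>S. 0 \<le> d s" using d01 by blast
      have "q w w \<ge> d m * q m w" unfolding w_def by (rule comb_sq[OF S(1) Scl dnn m(1)])
      hence "q w w \<ge> q m w" by (simp add: d_def)
      moreover have "q m w = (\<Sum>t\<in>S. d t * q m t)" by (simp add: w_def comb_lin)
      moreover have "(\<Sum>t\<in>S. d t * q m t) \<ge> (\<Sum>t\<in>A. d t * q m t)"
        by (rule sum_mono2) (use S AS dnn clos_qt mcl Scl in auto)
      moreover have "(\<Sum>t\<in>A. d t * q m t) \<ge> (\<Sum>t\<in>A. (c1 t / \<epsilon>) * \<mu>)"
      proof (rule sum_mono)
        fix t assume t: "t \<in> A"
        hence tS: "t \<in> S" and tm: "t \<noteq> m" and qt: "q m t > 0" using mA AS by (auto simp: A_def)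
        have "\<mu> \<le> q m t" using mu(2) m(1) tS qt by blast
        moreover have "c1 t / \<epsilon> \<ge> 0" using c1 tS epos by simp
        ultimately have "(c1 t / \<epsilon>) * \<mu> \<le> (c1 t / \<epsilon>) * q m t" by (rule mult_left_mono)
        thus "(c1 t / \<epsilon>) * \<mu> \<le> d t * q m t" using t tm by (simp add: d_def)
      qed
      moreover have "(\<Sum>t\<in>A. (c1 t / \<epsilon>) * \<mu>) = \<mu>"
      proof -
        have "(\<Sum>t\<in>A. (c1 t / \<epsilon>) * \<mu>) = (\<Sum>t\<in>A. (\<mu> / \<epsilon>) * c1 t)" by (rule sum.cong) auto
        also have "\<dots> = (\<mu> / \<epsilon>) * \<epsilon>" unfolding \<epsilon>_def by (rule sum_distrib_left[symmetric])
        also have "\<dots> = \<mu>" using epos by simp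
        finally show ?thesis .
      qed
      ultimately have "q w w \<ge> \<mu>" by linarith
      thus ?thesis using d01 wv dpos unfolding w_def by (intro exI[of _ d]) auto
    qed
  qed
qed

end


lemma abs_le_sq1: fixes x :: real assumes "x^2 \<le> R" shows "\<bar>x\<bar> \<le> R + 1"
proof (cases "\<bar>x\<bar> \<le> 1")
  case True
  moreover have "R \<ge> 0" using assms by (meson order_trans zero_le_power2)
  ultimately show ?thesis by simp
next
  case False
  hence "1 * \<bar>x\<bar> \<le> \<bar>x\<bar> * \<bar>x\<bar>" by (intro mult_right_mono) auto
  also have "\<bar>x\<bar> * \<bar>x\<bar> = x^2" by (simp add: power2_eq_square abs_mult_self_eq)
  finally show ?thesis using assms by simp
qed

lemma finite_int_box:
  fixes R :: "'n::finite \<Rightarrow> real"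
  shows "finite {z :: real^'n. \<forall>i. z$i \<in> \<int> \<and> \<bar>z$i\<bar> \<le> R i}"
proof -
  define F where "F i = {-\<lceil>R i\<rceil>..\<lceil>R i\<rceil>}" for i
  have fin: "finite (Pi\<^sub>E UNIV F)" by (rule finite_PiE) (auto simp: F_def)
  have "{z :: real^'n. \<forall>i. z$i \<in> \<int> \<and> \<bar>z$i\<bar> \<le> R i} \<subseteq> (\<lambda>f. \<chi> i. of_int (f i)) ` Pi\<^sub>E UNIV F"
  proof
    fix z :: "real^'n" assume z: "z \<in> {z. \<forall>i. z$i \<in> \<int> \<and> \<bar>z$i\<bar> \<le> R i}"
    define f where "f i = \<lfloor>z$i\<rfloor>" for i
    have zf: "z$i = of_int (f i)" for i using z by (auto simp: f_def elim!: Ints_cases)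
    have "f \<in> Pi\<^sub>E UNIV F"
    proof (unfold PiE_UNIV_domain, rule Pi_I)
      fix i
      have "\<bar>z$i\<bar> \<le> R i" using z by simp
      hence "\<bar>of_int (f i)\<bar> \<le> R i" using zf[of i] by simp
      hence "\<bar>f i\<bar> \<le> \<lceil>R i\<rceil>" by (metis ceiling_mono ceiling_of_int of_int_abs)
      thus "f i \<in> F i" by (auto simp: F_def)
    qed
    moreover have "z = (\<chi> i. of_int (f i))" using zf by (simp add: vec_eq_iff)
    ultimately show "z \<in> (\<lambda>f. \<chi> i. of_int (f i)) ` Pi\<^sub>E UNIV F" by blast
  qed
  thus ?thesis using fin finite_subset by blast
qed

context lor begin

lemma q_axis: "q v (axis i 1) = (B *v v) $ i"
proof -
  have "q v (axis i 1) = q (axis i 1) v" by (rule q_sym)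
  also have "\<dots> = (B *v v) $ i" by (simp add: bform_def inner_axis')
  finally show ?thesis .
qed

lemma coord_bound:
  assumes S: "finite S" "S \<subseteq> closure Cp" and d01: "\<forall>s\<in>S. 0 \<le> d s \<and> d s \<le> 1"
    and dl: "\<delta> > 0" "\<delta> \<le> q (\<Sum>s\<in>S. d s *\<^sub>R s) (\<Sum>s\<in>S. d s *\<^sub>R s)"
    and wv: "q (\<Sum>s\<in>S. d s *\<^sub>R s) v = 0" and cV: "- q v v < cV" "cV > 0"
  shows "(q v e)^2 \<le> cV * ((\<Sum>s\<in>S. \<bar>q s e\<bar>)^2 / \<delta> + \<bar>q e e\<bar>)"
proof -
  define w where "w = (\<Sum>s\<in>S. d s *\<^sub>R s)"
  have ww: "q w w > 0" using dl by (simp add: w_def)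
  have vw: "q v w = 0" using wv q_sym by (metis w_def)
  define F where "F = (q w e)^2 / q w w - q e e"
  have k: "(q v e)^2 \<le> (- q v v) * F" unfolding F_def by (rule key_cs[OF ww vw])
  have "q w w * q e e \<le> (q w e)^2" by (rule rev_cs[OF ww])
  hence F0: "F \<ge> 0" using ww by (simp add: F_def field_simps)
  have "(- q v v) * F \<le> cV * F" using cV F0 by (intro mult_right_mono) auto
  moreover have "F \<le> (\<Sum>s\<in>S. \<bar>q s e\<bar>)^2 / \<delta> + \<bar>q e e\<bar>"
  proof -
    have "\<bar>q w e\<bar> = \<bar>\<Sum>s\<in>S. d s * q s e\<bar>" by (simp add: w_def comb_lin_left)
    also have "\<dots> \<le> (\<Sum>s\<in>S. \<bar>d s * q s e\<bar>)" by (rule sum_abs)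
    also have "\<dots> \<le> (\<Sum>s\<in>S. \<bar>q s e\<bar>)"
    proof (rule sum_mono)
      fix s assume s: "s \<in> S"
      have "\<bar>d s * q s e\<bar> = d s * \<bar>q s e\<bar>" using d01 s by (simp add: abs_mult)
      also have "\<dots> \<le> 1 * \<bar>q s e\<bar>" using d01 s by (intro mult_right_mono) auto
      finally show "\<bar>d s * q s e\<bar> \<le> \<bar>q s e\<bar>" by simp
    qed
    finally have "\<bar>q w e\<bar>^2 \<le> (\<Sum>s\<in>S. \<bar>q s e\<bar>)^2" by (intro power_mono) auto
    hence a: "(q w e)^2 \<le> (\<Sum>s\<in>S. \<bar>q s e\<bar>)^2" by simp
    have "(q w e)^2 / q w w \<le> (q w e)^2 / \<delta>"
      using dl ww by (intro divide_left_mono) (auto simp: w_def)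
    also have "\<dots> \<le> (\<Sum>s\<in>S. \<bar>q s e\<bar>)^2 / \<delta>" using a dl by (intro divide_right_mono) auto
    finally show ?thesis unfolding F_def by linarith
  qed
  hence "cV * F \<le> cV * ((\<Sum>s\<in>S. \<bar>q s e\<bar>)^2 / \<delta> + \<bar>q e e\<bar>)" using cV by (intro mult_left_mono) auto
  ultimately show ?thesis using k by linarith
qed

lemma W_finite:
  assumes S: "finite S" "S \<subseteq> closure Cp \<inter> lat" "0 \<notin> S" and cV: "cV > 0"
    and V: "V \<subseteq> dual_lat B" "\<forall>v\<in>V. - q v v < cV" and invB: "invertible B"
  shows "finite {v\<in>V. \<exists>c. (\<forall>s\<in>S. c s \<ge> 0) \<and> (\<Sum>s\<in>S. c s *\<^sub>R s) \<in> Cp \<and> q (\<Sum>s\<in>S. c s *\<^sub>R s) v = 0}"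
proof -
  have Scl: "S \<subseteq> closure Cp" using S by auto
  define PP where "PP = {(s,t). s \<in> S \<and> t \<in> S \<and> q s t > 0}"
  have "PP \<subseteq> S \<times> S" by (auto simp: PP_def)
  hence PPfin: "finite PP" using S(1) finite_subset by blast
  define \<mu> where "\<mu> = Min (insert 1 ((\<lambda>(s,t). q s t) ` PP))"
  have mu: "\<mu> > 0" unfolding \<mu>_def using PPfin by (auto simp: PP_def)
  have mu2: "\<forall>s\<in>S. \<forall>t\<in>S. q s t > 0 \<longrightarrow> \<mu> \<le> q s t"
  proof (intro ballI impI)
    fix s t assume "s \<in> S" "t \<in> S" "q s t > 0"
    hence "q s t \<in> insert 1 ((\<lambda>(s,t). q s t) ` PP)" by (force simp: PP_def)
    thus "\<mu> \<le> q s t" unfolding \<mu>_def using PPfin by (intro Min_le) auto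
  qed
  define Mx where "Mx = (\<Sum>t\<in>S. \<Sum>s\<in>S. \<bar>q s t\<bar>)"
  have Mx0: "Mx \<ge> 0" by (simp add: Mx_def sum_nonneg)
  have Mx: "\<forall>t\<in>S. \<forall>d. (\<forall>s\<in>S. 0 \<le> d s \<and> d s \<le> 1) \<longrightarrow> \<bar>q (\<Sum>s\<in>S. d s *\<^sub>R s) t\<bar> \<le> Mx"
  proof (intro ballI allI impI)
    fix t and d :: "_ \<Rightarrow> real" assume t: "t \<in> S" and d: "\<forall>s\<in>S. 0 \<le> d s \<and> d s \<le> 1"
    have "\<bar>q (\<Sum>s\<in>S. d s *\<^sub>R s) t\<bar> = \<bar>\<Sum>s\<in>S. d s * q s t\<bar>" by (simp add: comb_lin_left)
    also have "\<dots> \<le> (\<Sum>s\<in>S. \<bar>d s * q s t\<bar>)" by (rule sum_abs)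
    also have "\<dots> \<le> (\<Sum>s\<in>S. \<bar>q s t\<bar>)"
    proof (rule sum_mono)
      fix s assume s: "s \<in> S"
      have "\<bar>d s * q s t\<bar> = d s * \<bar>q s t\<bar>" using d s by (simp add: abs_mult)
      also have "\<dots> \<le> 1 * \<bar>q s t\<bar>" using d s by (intro mult_right_mono) auto
      finally show "\<bar>d s * q s t\<bar> \<le> \<bar>q s t\<bar>" by simp
    qed
    also have "\<dots> \<le> Mx" unfolding Mx_def
      by (rule member_le_sum[where f = "\<lambda>t. \<Sum>s\<in>S. \<bar>q s t\<bar>"]) (use t S in \<open>auto intro: sum_nonneg\<close>)
    finally show "\<bar>q (\<Sum>s\<in>S. d s *\<^sub>R s) t\<bar> \<le> Mx" .
  qed
  define \<epsilon>0 where "\<epsilon>0 = \<mu> / (cV * Mx^2 + 1)"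
  define \<delta> where "\<delta> = \<mu> * min 1 \<epsilon>0"
  have "cV * Mx^2 \<ge> 0" using cV by simp
  hence "cV * Mx^2 + 1 > 0" by linarith
  hence e0: "\<epsilon>0 > 0" using mu unfolding \<epsilon>0_def by (intro divide_pos_pos)
  have dl: "\<delta> > 0" using mu e0 by (simp add: \<delta>_def)
  define R where "R i = cV * ((\<Sum>s\<in>S. \<bar>q s (axis i 1)\<bar>)^2 / \<delta> + \<bar>q (axis i 1) (axis i 1)\<bar>) + 1" for i
  let ?W = "{v\<in>V. \<exists>c. (\<forall>s\<in>S. c s \<ge> 0) \<and> (\<Sum>s\<in>S. c s *\<^sub>R s) \<in> Cp \<and> q (\<Sum>s\<in>S. c s *\<^sub>R s) v = 0}"
  have "?W \<subseteq> (\<lambda>v. B *v v) -` {z :: real^'n. \<forall>i. z$i \<in> \<int> \<and> \<bar>z$i\<bar> \<le> R i}"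
  proof
    fix v assume v: "v \<in> ?W"
    then obtain c where c: "\<forall>s\<in>S. c s \<ge> 0" "(\<Sum>s\<in>S. c s *\<^sub>R s) \<in> Cp" "q (\<Sum>s\<in>S. c s *\<^sub>R s) v = 0" by blast
    have vd: "v \<in> dual_lat B" "- q v v < cV" using v V by auto
    obtain d where d: "\<forall>s\<in>S. 0 \<le> d s \<and> d s \<le> 1" "\<delta> \<le> q (\<Sum>s\<in>S. d s *\<^sub>R s) (\<Sum>s\<in>S. d s *\<^sub>R s)"
        "q (\<Sum>s\<in>S. d s *\<^sub>R s) v = 0"
      using good_w_core[OF S cV mu mu2 Mx0 Mx \<epsilon>0_def vd c] unfolding \<delta>_def by blast
    have "\<forall>i. (B *v v)$i \<in> \<int> \<and> \<bar>(B *v v)$i\<bar> \<le> R i"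
    proof
      fix i
      have "(q v (axis i 1))^2 \<le> R i - 1"
        unfolding R_def using coord_bound[OF S(1) Scl d(1) dl d(2) d(3) vd(2) cV] by simp
      hence "\<bar>q v (axis i 1)\<bar> \<le> R i" using abs_le_sq1 by fastforce
      moreover have "axis i 1 \<in> lat" by (auto simp: lat_def axis_def)
      hence "q v (axis i 1) \<in> \<int>" using vd(1) by (simp add: dual_lat_def)
      ultimately show "(B *v v)$i \<in> \<int> \<and> \<bar>(B *v v)$i\<bar> \<le> R i" by (simp add: q_axis)
    qed
    thus "v \<in> (\<lambda>v. B *v v) -` {z. \<forall>i. z$i \<in> \<int> \<and> \<bar>z$i\<bar> \<le> R i}" by simp
  qed
  moreover have "finite ((\<lambda>v. B *v v) -` {z :: real^'n. \<forall>i. z$i \<in> \<int> \<and> \<bar>z$i\<bar> \<le> R i})"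
    by (rule finite_vimageI[OF finite_int_box inj_matrix_vector_mult[OF invB]])
  ultimately show ?thesis by (rule finite_subset)
qed

end


lemma mink_F2s:
  fixes a b :: "real^'n" and i0 :: 'n
  defines "J \<equiv> (\<chi> i j. if i = j then (if i = i0 then 1 else -1) else 0) :: real^'n^'n"
  assumes aa: "a \<bullet> (J *v a) > 0" and ab: "a \<bullet> (J *v b) = 0" and b0: "b \<noteq> 0"
  shows "b \<bullet> (J *v b) < 0"
proof -
  define bar where "bar x = (\<chi> i. if i = i0 then 0 else x$i)" for x :: "real^'n"
  have M: "x \<bullet> (J *v y) = x$i0 * y$i0 - bar x \<bullet> bar y" for x y
  proof -
    have Jy: "(J *v y)$i = (if i = i0 then y$i else - y$i)" for i
      by (simp add: J_def matrix_vector_mult_def if_distrib[of "\<lambda>t. t * _"] cong: if_cong)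
    have "x \<bullet> (J *v y) = (\<Sum>i\<in>UNIV. (if i = i0 then x$i * y$i else 0) - (if i = i0 then 0 else x$i * y$i))"
      unfolding inner_vec_def by (rule sum.cong) (auto simp: Jy)
    also have "\<dots> = x$i0 * y$i0 - bar x \<bullet> bar y"
      unfolding sum_subtractf inner_vec_def bar_def by (simp add: if_distrib[of "\<lambda>t. t * _"] cong: if_cong)
    finally show ?thesis .
  qed
  have a1: "(a$i0)^2 > bar a \<bullet> bar a" using aa M[of a a] unfolding power2_eq_square by linarith
  have a2: "a$i0 * b$i0 = bar a \<bullet> bar b" using ab M[of a b] by simp
  have baa: "bar a \<bullet> bar a \<ge> 0" by simp
  show ?thesis
  proof (cases "bar b = 0")
    case True
    hence "a$i0 * b$i0 = 0" using a2 by simp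
    moreover have "a$i0 \<noteq> 0"
    proof
      assume "a$i0 = 0"
      hence "bar a \<bullet> bar a < 0" using a1 by simp
      thus False using baa by linarith
    qed
    ultimately have "b$i0 = 0" by simp
    hence "b = 0" using True by (auto simp: vec_eq_iff bar_def) (metis vec_lambda_beta)
    thus ?thesis using b0 by simp
  next
    case False
    hence bb: "bar b \<bullet> bar b > 0" by simp
    have cs: "(bar a \<bullet> bar b)^2 \<le> (bar a \<bullet> bar a) * (bar b \<bullet> bar b)" by (rule Cauchy_Schwarz_ineq)
    have "(b$i0)^2 < bar b \<bullet> bar b"
    proof (rule ccontr)
      assume "\<not> (b$i0)^2 < bar b \<bullet> bar b"
      hence le: "bar b \<bullet> bar b \<le> (b$i0)^2" by simp
      hence bpos: "(b$i0)^2 > 0" using bb by linarith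
      have "(bar a \<bullet> bar a) * (bar b \<bullet> bar b) \<le> (bar a \<bullet> bar a) * (b$i0)^2"
        using le baa by (intro mult_left_mono) auto
      also have "\<dots> < (a$i0)^2 * (b$i0)^2" using a1 bpos by (intro mult_strict_right_mono) auto
      also have "\<dots> = (bar a \<bullet> bar b)^2" using a2 by (simp add: power_mult_distrib[symmetric])
      finally show False using cs by simp
    qed
    thus ?thesis using M[of b b] by (simp add: power2_eq_square)
  qed
qed

lemma sylv_F2s:
  fixes B P :: "real^'n^'n" and i0 :: 'n
  assumes P: "invertible P" and S: "transpose P ** B ** P = (\<chi> i j. if i = j then (if i = i0 then 1 else -1) else 0)"
    and xx: "bform B x x > 0" and xy: "bform B x y = 0" and y0: "y \<noteq> 0"
  shows "bform B y y < 0"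
proof -
  define J where "J = ((\<chi> i j. if i = j then (if i = i0 then 1 else -1) else 0) :: real^'n^'n)"
  obtain Q where Q: "P ** Q = mat 1" using P by (auto simp: invertible_def)
  have tr: "bform B (P *v a) (P *v b) = a \<bullet> (J *v b)" for a b
  proof -
    have "bform B (P *v a) (P *v b) = (a v* transpose P) \<bullet> (B *v (P *v b))"
      by (simp add: bform_def transpose_matrix_vector[symmetric])
    also have "\<dots> = a \<bullet> (transpose P *v (B *v (P *v b)))" by (rule dot_lmul_matrix)
    also have "\<dots> = a \<bullet> ((transpose P ** (B ** P)) *v b)" by (simp add: matrix_vector_mul_assoc)
    also have "transpose P ** (B ** P) = J" using S by (simp add: matrix_mul_assoc J_def)
    finally show ?thesis .
  qed
  have inv: "P *v (Q *v z) = z" for z using Q by (simp add: matrix_vector_mul_assoc)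
  define a where "a = Q *v x"
  define b where "b = Q *v y"
  have xa: "x = P *v a" and yb: "y = P *v b" using inv by (auto simp: a_def b_def)
  have "b \<noteq> 0" using y0 yb by auto
  moreover have "a \<bullet> (J *v a) > 0" using xx tr xa by metis
  moreover have "a \<bullet> (J *v b) = 0" using xy tr xa yb by metis
  ultimately have "b \<bullet> (J *v b) < 0" using mink_F2s[of a i0 b] unfolding J_def by blast
  thus ?thesis using tr yb by metis
qed

context lor begin

lemma chamber_fin:
  fixes V W0 Pi' :: "(real^'n) set"
  assumes W0: "finite W0" "W0 \<subseteq> V" and nz: "\<forall>v\<in>V - W0. \<forall>x\<in>Pi'. q x v \<noteq> 0"
    and cvx: "convex Pi'" and sub: "Pi' \<subseteq> Cp"
  shows "finite {D\<in>chambers B h V. D \<inter> Pi' \<noteq> {}}"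
proof -
  define U where "U = Cp - (\<Union>v\<in>V. perp_hyp B h v)"
  have Ueq: "y \<in> U \<longleftrightarrow> y \<in> Cp \<and> (\<forall>v\<in>V. q y v \<noteq> 0)" for y
    by (auto simp: U_def perp_hyp_def pos_cone_eq)
  have ch: "chambers B h V = {closure (connected_component_set U x) \<inter> Cp | x. x \<in> U}"
    by (simp add: chambers_def U_def pos_cone_eq Let_def)
  have ccU: "connected_component_set U x \<subseteq> U" for x by (rule connected_component_subset)
  have sgnp: "q y v > 0" if x: "x \<in> U" and y: "y \<in> connected_component_set U x" and v: "v \<in> V"
      and fx: "q x v > 0" for x y v
  proof (rule sign_const[of "connected_component_set U x" "\<lambda>y. q y v" x y])
    show "continuous_on (connected_component_set U x) (\<lambda>y. q y v)" by (auto intro!: q_cont continuous_intros)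
    show "\<forall>y\<in>connected_component_set U x. q y v \<noteq> 0" using ccU Ueq v by fastforce
  qed (use x y fx in auto)
  have sgnn: "q y v < 0" if x: "x \<in> U" and y: "y \<in> connected_component_set U x" and v: "v \<in> V"
      and fx: "q x v < 0" for x y v
  proof -
    have "- q y v > 0"
    proof (rule sign_const[of "connected_component_set U x" "\<lambda>y. - q y v" x y])
      show "continuous_on (connected_component_set U x) (\<lambda>y. - q y v)" by (auto intro!: q_cont continuous_intros)
      show "\<forall>y\<in>connected_component_set U x. - q y v \<noteq> 0" using ccU Ueq v by fastforce
    qed (use x y fx in auto)
    thus ?thesis by simp
  qed
  have clos: "q x v > 0 \<longleftrightarrow> q z v > 0" if x: "x \<in> U" and z: "z \<in> closure (connected_component_set U x)"
      and v: "v \<in> V" and zv: "q z v \<noteq> 0" for x z v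
  proof -
    have xv: "q x v \<noteq> 0" using x v Ueq by blast
    show ?thesis
    proof (cases "q x v > 0")
      case True
      have "closure (connected_component_set U x) \<subseteq> {y. 0 \<le> q y v}"
      proof (rule closure_minimal)
        show "connected_component_set U x \<subseteq> {y. 0 \<le> q y v}" using sgnp[OF x _ v True] by (auto intro: less_imp_le)
        show "closed {y. 0 \<le> q y v}" by (rule closed_Collect_le) (auto intro!: q_cont continuous_intros)
      qed
      thus ?thesis using z zv True by force
    next
      case False
      hence neg: "q x v < 0" using xv by simp
      have "closure (connected_component_set U x) \<subseteq> {y. q y v \<le> 0}"
      proof (rule closure_minimal)
        show "connected_component_set U x \<subseteq> {y. q y v \<le> 0}" using sgnn[OF x _ v neg] by (auto intro: less_imp_le)
        show "closed {y. q y v \<le> 0}" by (rule closed_Collect_le) (auto intro!: q_cont continuous_intros)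
      qed
      thus ?thesis using z False by force
    qed
  qed
  have piconst: "q z2 v > 0" if z1: "z1 \<in> Pi'" and z2: "z2 \<in> Pi'" and v: "v \<in> V - W0" and p: "q z1 v > 0" for z1 z2 v
  proof (rule ccontr)
    assume "\<not> q z2 v > 0"
    hence n: "q z2 v < 0" using nz v z2 by force
    define t where "t = q z1 v / (q z1 v - q z2 v)"
    have t: "0 \<le> t" "t \<le> 1" using p n by (auto simp: t_def divide_simps)
    have "(1 - t) *\<^sub>R z1 + t *\<^sub>R z2 \<in> Pi'" using cvx z1 z2 t unfolding convex_def by auto
    moreover have "q ((1 - t) *\<^sub>R z1 + t *\<^sub>R z2) v = 0"
    proof -
      have "q ((1 - t) *\<^sub>R z1 + t *\<^sub>R z2) v = (1 - t) * q z1 v + t * q z2 v"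
        by (simp add: q_add_left q_scale_left)
      also have "\<dots> = q z1 v - t * (q z1 v - q z2 v)" by (simp add: algebra_simps)
      also have "\<dots> = 0" using p n by (simp add: t_def)
      finally show ?thesis .
    qed
    ultimately show False using nz v by blast
  qed
  define sig where "sig x = {v\<in>W0. q x v > 0}" for x
  have key: "connected_component_set U x1 = connected_component_set U x2"
    if x1: "x1 \<in> U" and x2: "x2 \<in> U" and m1: "closure (connected_component_set U x1) \<inter> Pi' \<noteq> {}"
      and m2: "closure (connected_component_set U x2) \<inter> Pi' \<noteq> {}" and sg: "sig x1 = sig x2" for x1 x2
  proof -
    obtain z1 where z1: "z1 \<in> closure (connected_component_set U x1)" "z1 \<in> Pi'" using m1 by blast
    obtain z2 where z2: "z2 \<in> closure (connected_component_set U x2)" "z2 \<in> Pi'" using m2 by blast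
    have same: "q x1 v > 0 \<longleftrightarrow> q x2 v > 0" if v: "v \<in> V" for v
    proof (cases "v \<in> W0")
      case True
      thus ?thesis using sg by (auto simp: sig_def set_eq_iff)
    next
      case False
      hence vW: "v \<in> V - W0" using v by simp
      have "q x1 v > 0 \<longleftrightarrow> q z1 v > 0" using clos[OF x1 z1(1) v] nz vW z1(2) by blast
      also have "\<dots> \<longleftrightarrow> q z2 v > 0" using piconst[OF z1(2) z2(2) vW] piconst[OF z2(2) z1(2) vW] by blast
      also have "\<dots> \<longleftrightarrow> q x2 v > 0" using clos[OF x2 z2(1) v] nz vW z2(2) by blast
      finally show ?thesis .
    qed
    have "closed_segment x1 x2 \<subseteq> U"
    proof
      fix y assume "y \<in> closed_segment x1 x2"
      then obtain u :: real where u: "0 \<le> u" "u \<le> 1" and y: "y = (1 - u) *\<^sub>R x1 + u *\<^sub>R x2"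
        by (auto simp: closed_segment_def)
      have "y \<in> Cp" using Cp_convex x1 x2 Ueq u unfolding y convex_def by auto
      moreover have "q y v \<noteq> 0" if v: "v \<in> V" for v
      proof -
        have e: "q y v = (1 - u) * q x1 v + u * q x2 v" by (simp add: y q_add_left q_scale_left)
        have n1: "q x1 v \<noteq> 0" and n2: "q x2 v \<noteq> 0" using x1 x2 v Ueq by auto
        show ?thesis
        proof (cases "q x1 v > 0")
          case True
          hence "q x2 v > 0" using same v by blast
          moreover have "(1 - u) * q x1 v \<ge> 0" using True u by simp
          moreover have "u * q x2 v \<ge> 0" using calculation u by simp
          moreover have "(1 - u) * q x1 v > 0 \<or> u * q x2 v > 0"
            using True \<open>q x2 v > 0\<close> u by (cases "u = 1") auto
          ultimately show ?thesis using e by linarith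
        next
          case False
          hence a: "q x1 v < 0" using n1 by simp
          hence b: "q x2 v < 0" using same v n2 False by force
          have "(1 - u) * q x1 v \<le> 0" using a u by (simp add: mult_nonneg_nonpos)
          moreover have "u * q x2 v \<le> 0" using b u by (simp add: mult_nonneg_nonpos)
          moreover have "(1 - u) * q x1 v < 0 \<or> u * q x2 v < 0"
            using a b u by (cases "u = 1") (auto simp: mult_pos_neg)
          ultimately show ?thesis using e by linarith
        qed
      qed
      ultimately show "y \<in> U" using Ueq by blast
    qed
    hence "closed_segment x1 x2 \<subseteq> connected_component_set U x1"
      by (intro connected_component_maximal) auto
    hence "x2 \<in> connected_component_set U x1" by auto
    thus ?thesis by (rule connected_component_eq[symmetric])
  qed
  define Ch where "Ch T = {D. \<exists>x\<in>U. D = closure (connected_component_set U x) \<inter> Cp \<and> D \<inter> Pi' \<noteq> {} \<and> sig x = T}" for T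
  have "{D\<in>chambers B h V. D \<inter> Pi' \<noteq> {}} \<subseteq> (\<Union>T\<in>Pow W0. Ch T)"
    unfolding ch Ch_def sig_def by blast
  moreover have "finite (\<Union>T\<in>Pow W0. Ch T)"
  proof (rule finite_UN_I)
    show "finite (Pow W0)" using W0 by simp
    fix T assume "T \<in> Pow W0"
    have "\<forall>D1\<in>Ch T. \<forall>D2\<in>Ch T. D1 = D2"
    proof (intro ballI)
      fix D1 D2 assume "D1 \<in> Ch T" "D2 \<in> Ch T"
      then obtain x1 x2 where x1: "x1 \<in> U" "D1 = closure (connected_component_set U x1) \<inter> Cp" "D1 \<inter> Pi' \<noteq> {}" "sig x1 = T"
        and x2: "x2 \<in> U" "D2 = closure (connected_component_set U x2) \<inter> Cp" "D2 \<inter> Pi' \<noteq> {}" "sig x2 = T"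
        unfolding Ch_def by blast
      have "closure (connected_component_set U x1) \<inter> Pi' \<noteq> {}" using x1 by blast
      moreover have "closure (connected_component_set U x2) \<inter> Pi' \<noteq> {}" using x2 by blast
      ultimately have "connected_component_set U x1 = connected_component_set U x2"
        using key x1 x2 by simp
      thus "D1 = D2" using x1 x2 by simp
    qed
    thus "finite (Ch T)"
      by (metis (no_types, lifting) finite.simps insertCI subsetI finite_subset)
  qed
  ultimately show ?thesis by (rule finite_subset)
qed

end


theorem proposition3p11:
  fixes B :: "real^'n^'n" and h :: "real^'n"
    and G :: "(real^'n \<Rightarrow> real^'n) set" and V S :: "(real^'n) set"
  assumes L: "even_hyperbolic B"
    and h: "bform B h h > 0"
    and G: "finite_index_subgroup G (O_plus B h)"
    and V: "V \<subseteq> neg_set B \<inter> dual_lat B"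
    and V1: "\<exists>c>0. \<forall>v\<in>V. - bform B v v < c"
    and V2: "\<forall>g\<in>G. g ` V = V"
    and V3: "\<forall>D\<in>chambers B h V. \<exists>\<Delta>. finite \<Delta> \<and> defining_set B h D \<Delta>"
    and V4: "\<forall>D\<in>chambers B h V. \<forall>x\<in>closure D. x \<noteq> 0 \<and> bform B x x = 0 \<longrightarrow>
               (\<exists>t>0. \<exists>l\<in>lat. x = t *\<^sub>R l)"
    and S: "finite S" "S \<subseteq> closure (pos_cone B h) \<inter> lat" "0 \<notin> S"
  shows "finite {D \<in> chambers B h V.
           D \<inter> ({\<Sum>v\<in>S. c v *\<^sub>R v | c. \<forall>v\<in>S. c v \<ge> 0} \<inter> pos_cone B h) \<noteq> {}}"
proof -
  obtain P :: "real^'n^'n" and i0 where invP: "invertible P"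
    and Sy: "transpose P ** B ** P = (\<chi> i j. if i = j then (if i = i0 then 1 else -1) else 0)"
    and symB: "transpose B = B" and detB: "det B \<noteq> 0"
    using L unfolding even_hyperbolic_def by blast
  interpret l: lor B h
  proof
    show "transpose B = B" by (rule symB)
    show "bform B h h > 0" by (rule h)
    fix x y assume "bform B x x > 0" "bform B x y = 0" "y \<noteq> 0"
    thus "bform B y y < 0" using sylv_F2s[OF invP Sy] by blast
  qed
  have invB: "invertible B" using detB invertible_det_nz by blast
  obtain cV where cV: "cV > 0" "\<forall>v\<in>V. - bform B v v < cV" using V1 by blast
  have pc: "pos_cone B h = l.Cp" by (rule l.pos_cone_eq)
  define Pi where "Pi = {\<Sum>v\<in>S. c v *\<^sub>R v | c. \<forall>v\<in>S. c v \<ge> 0}"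
  define Pi' where "Pi' = Pi \<inter> l.Cp"
  define W0 where "W0 = {v\<in>V. \<exists>x\<in>Pi'. bform B x v = 0}"
  have S': "finite S" "S \<subseteq> closure l.Cp \<inter> lat" "0 \<notin> S" using S pc by auto
  have VL: "V \<subseteq> dual_lat B" using V by auto
  have "W0 \<subseteq> {v\<in>V. \<exists>c. (\<forall>s\<in>S. c s \<ge> 0) \<and> (\<Sum>s\<in>S. c s *\<^sub>R s) \<in> l.Cp \<and> bform B (\<Sum>s\<in>S. c s *\<^sub>R s) v = 0}"
    unfolding W0_def Pi'_def Pi_def by blast
  hence W0fin: "finite W0" using l.W_finite[OF S' cV(1) VL cV(2) invB] finite_subset by blast
  have cvxPi: "convex Pi"
    unfolding convex_def
  proof (intro ballI allI impI)
    fix x y and a b :: real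
    assume x: "x \<in> Pi" and y: "y \<in> Pi" and ab: "0 \<le> a" "0 \<le> b" "a + b = 1"
    obtain c1 where c1: "x = (\<Sum>v\<in>S. c1 v *\<^sub>R v)" "\<forall>v\<in>S. c1 v \<ge> 0" using x by (auto simp: Pi_def)
    obtain c2 where c2: "y = (\<Sum>v\<in>S. c2 v *\<^sub>R v)" "\<forall>v\<in>S. c2 v \<ge> 0" using y by (auto simp: Pi_def)
    have "a *\<^sub>R x + b *\<^sub>R y = (\<Sum>v\<in>S. (a * c1 v + b * c2 v) *\<^sub>R v)"
      by (simp add: c1 c2 scaleR_sum_right sum.distrib[symmetric] scaleR_add_left)
    moreover have "\<forall>v\<in>S. a * c1 v + b * c2 v \<ge> 0" using c1 c2 ab by simp
    ultimately show "a *\<^sub>R x + b *\<^sub>R y \<in> Pi" unfolding Pi_def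
      by (intro CollectI exI[of _ "\<lambda>v. a * c1 v + b * c2 v"]) simp
  qed
  have cvx: "convex Pi'" unfolding Pi'_def by (rule convex_Int[OF cvxPi l.Cp_convex])
  have nz: "\<forall>v\<in>V - W0. \<forall>x\<in>Pi'. bform B x v \<noteq> 0" unfolding W0_def by blast
  have "finite {D\<in>chambers B h V. D \<inter> Pi' \<noteq> {}}"
    by (rule l.chamber_fin[OF W0fin _ nz cvx]) (auto simp: W0_def Pi'_def)
  thus ?thesis unfolding Pi'_def Pi_def pc .
qed


end
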